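(* For real $0<y<2\pi$, $$\sum_{n=0}^{\infty} (-1)^n B_n R_n(y)=e^{y}\left(y\ln(1-e^{-y})-\mathrm{Li}_2(e^{-y})+\frac{\pi^2}{6}\right).$$
   Context: For an integer $n\ge 0$ and complex $y$, $R_n(y)=e^y-1-\frac{y}{1!}-\frac{y^2}{2!}-\dots-\frac{y^n}{n!}=e^y-\sum_{k=0}^n\frac{y^k}{k!}$. $B_n$ are the Bernoulli numbers, defined by $\frac{z}{e^z-1}=\sum_{n\ge0}B_n\frac{z^n}{n!}$ ($|z|<2\pi$). $\mathrm{Li}_2(z)=\sum_{n\ge1}\frac{z^n}{n^2}$ is the dilogarithm. *)

theory Defs
  imports "HOL-Analysis.Analysis" "HOL-Computational_Algebra.Formal_Power_Series"
begin

text \<open>Bernoulli numbers via their exponential generating function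
  z/(e^z - 1) = sum B_n z^n/n!, taken as a formal power series:
  (e^z - 1)/z is the FPS fps_shift 1 (fps_exp 1 - 1) (constant term 1),
  and z/(e^z-1) is its inverse.\<close>
definition bernoulli_num :: "nat \<Rightarrow> real" where
  "bernoulli_num n = fact n * fps_nth (inverse (fps_shift 1 (fps_exp (1::real) - 1))) n"

definition Rrem :: "nat \<Rightarrow> real \<Rightarrow> real" where
  "Rrem n y = exp y - (\<Sum>k\<le>n. y ^ k / fact k)"

definition Li2 :: "real \<Rightarrow> real" where
  "Li2 z = (\<Sum>n. z ^ (Suc n) / (real (Suc n))^2)"

end

theory Submission
  imports Defs "HOL-Complex_Analysis.Complex_Analysis" "HOL-Real_Asymp.Real_Asymp"
begin


definition Er :: "real fps" where "Er = fps_shift 1 (fps_exp 1 - 1)"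
definition Ec :: "complex fps" where "Ec = fps_shift 1 (fps_exp 1 - 1)"

lemma Er_nth: "fps_nth Er n = 1 / fact (Suc n)" by (simp add: Er_def algebra_simps)
lemma Ec_nth: "fps_nth Ec n = 1 / fact (Suc n)" by (simp add: Ec_def algebra_simps)

lemma bern_c: "fps_nth (inverse Ec) n = of_real (bernoulli_num n / fact n)"
proof -
  define C where "C = Abs_fps (\<lambda>n. complex_of_real (fps_nth (inverse Er) n))"
  have r1: "Er * inverse Er = 1"
    using inverse_mult_eq_1[of Er] by (simp add: Er_nth mult.commute)
  have "Ec * C = 1"
  proof (rule fps_ext)
    fix n
    have "(Ec * C) $ n = (\<Sum>i=0..n. Ec $ i * C $ (n - i))" by (simp add: fps_mult_nth)
    also have "\<dots> = of_real (\<Sum>i=0..n. Er $ i * inverse Er $ (n - i))"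
      by (simp add: C_def Ec_nth Er_nth)
    also have "\<dots> = of_real ((Er * inverse Er) $ n)" by (simp add: fps_mult_nth)
    also have "\<dots> = 1 $ n" using r1 by (simp add: fps_one_nth)
    finally show "(Ec * C) $ n = 1 $ n" .
  qed
  hence "inverse Ec = C" by (rule fps_inverse_unique)
  thus ?thesis by (simp add: C_def bernoulli_num_def Er_def)
qed

lemma Ec_radius: "fps_conv_radius Ec = \<infinity>"
proof -
  have "fps_conv_radius (fps_exp (1::complex) - 1) \<ge> min \<infinity> \<infinity>"
    using fps_conv_radius_diff[of "fps_exp (1::complex)" 1] by simp
  thus ?thesis by (simp add: Ec_def)
qed

lemma Ec_eval: "eval_fps Ec z = (if z = 0 then 1 else (exp z - 1) / z)"
proof -
  have ne: "fps_exp (1::complex) - 1 \<noteq> 0"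
  proof
    assume "fps_exp (1::complex) - 1 = 0"
    hence "(fps_exp (1::complex) - 1) $ 1 = 0" by simp
    thus False by simp
  qed
  have sd: "1 \<le> subdegree (fps_exp (1::complex) - 1)"
    by (rule subdegree_geI[OF ne]) simp
  have rad: "fps_conv_radius (fps_exp (1::complex) - 1) = \<infinity>"
    using Ec_radius by (simp add: Ec_def)
  have "eval_fps Ec z = (if z = 0 then (fps_exp (1::complex) - 1) $ 1
           else eval_fps (fps_exp 1 - 1) z / z ^ 1)"
    unfolding Ec_def by (rule eval_fps_shift[OF sd]) (simp add: rad)
  also have "eval_fps (fps_exp (1::complex) - 1) z = exp z - 1"
    by (subst eval_fps_diff) auto
  finally show ?thesis by simp
qed

lemma Ec_nz:
  assumes "norm z < 2 * pi"
  shows "eval_fps Ec z \<noteq> 0"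
proof (cases "z = 0")
  case True thus ?thesis by (simp add: Ec_eval)
next
  case False
  have "exp z \<noteq> 1"
  proof
    assume "exp z = 1"
    then obtain n :: int where n: "Re z = 0" "Im z = of_int (2 * n) * pi"
      by (auto simp: exp_eq_1)
    have "n \<noteq> 0" using n False complex_eq_iff by auto
    hence "\<bar>of_int n\<bar> \<ge> (1::real)" by linarith
    hence "\<bar>Im z\<bar> \<ge> 2 * pi" using n pi_gt_zero
      by (simp add: abs_mult)
    moreover have "\<bar>Im z\<bar> \<le> norm z" by (rule abs_Im_le_cmod)
    ultimately show False using assms by linarith
  qed
  thus ?thesis using False by (simp add: Ec_eval)
qed

lemma bern_sums_c:
  assumes "norm z < 2 * pi"
  shows "(\<lambda>n. of_real (bernoulli_num n / fact n) * z ^ n) sums inverse (eval_fps Ec z)"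
proof -
  have exp: "(\<lambda>z. inverse (eval_fps Ec z)) has_fps_expansion inverse Ec"
    by (intro has_fps_expansion_inverse eval_fps_has_fps_expansion) (auto simp: Ec_radius Ec_nth)
  have hol: "(\<lambda>z. inverse (eval_fps Ec z)) holomorphic_on eball 0 (ereal (2 * pi))"
    by (intro holomorphic_intros holomorphic_on_eval_fps) (auto simp: Ec_radius Ec_nz)
  show ?thesis
    using has_fps_expansion_imp_sums_complex[OF exp hol] assms by (simp add: bern_c)
qed

lemma bern_sums:
  fixes t :: real
  assumes "\<bar>t\<bar> < 2 * pi"
  shows "(\<lambda>n. bernoulli_num n / fact n * t ^ n) sums (if t = 0 then 1 else t / (exp t - 1))"
proof -
  have "(\<lambda>n. of_real (bernoulli_num n / fact n) * (of_real t) ^ n) sums inverse (eval_fps Ec (of_real t))"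
    by (rule bern_sums_c) (use assms in simp)
  also have "inverse (eval_fps Ec (of_real t)) = of_real (if t = 0 then 1 else t / (exp t - 1))"
    by (simp add: Ec_eval exp_of_real[symmetric])
  also have "(\<lambda>n. of_real (bernoulli_num n / fact n) * (of_real t) ^ n) =
     (\<lambda>n. complex_of_real (bernoulli_num n / fact n * t ^ n))" by (simp add: fun_eq_iff)
  finally show ?thesis unfolding sums_of_real_iff .
qed

lemma bern_abs:
  fixes r :: real
  assumes "0 \<le> r" "r < 2 * pi"
  shows "summable (\<lambda>n. \<bar>bernoulli_num n / fact n\<bar> * r ^ n)"
proof -
  define x where "x = (r + 2 * pi) / 2"
  have "summable (\<lambda>n. bernoulli_num n / fact n * x ^ n)"
    using bern_sums[of x] assms by (auto simp: x_def sums_iff)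
  from powser_insidea[OF this, of r] have "summable (\<lambda>n. norm (bernoulli_num n / fact n * r ^ n))"
    using assms by (simp add: x_def)
  thus ?thesis using assms by (simp add: abs_mult)
qed



lemma Li2_one: "Li2 1 = pi ^ 2 / 6"
proof -
  have "(\<lambda>n. (1::real) ^ Suc n / (real (Suc n))\<^sup>2) sums (pi\<^sup>2 / 6)"
    using inverse_squares_sums by (simp add: add.commute)
  thus ?thesis by (simp add: Li2_def sums_iff)
qed

lemma Li2_cont: "continuous_on {0..1} Li2"
proof -
  have ul: "uniform_limit {0..1} (\<lambda>n x. \<Sum>i<n. x ^ Suc i / (real (Suc i))\<^sup>2)
              (\<lambda>x. \<Sum>i. x ^ Suc i / (real (Suc i))\<^sup>2) sequentially"
  proof (rule Weierstrass_m_test)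
    fix n and x :: real assume x: "x \<in> {0..1}"
    have "x ^ Suc n \<le> 1" by (rule power_le_one) (use x in auto)
    moreover have "0 \<le> x ^ Suc n" using x by simp
    ultimately show "norm (x ^ Suc n / (real (Suc n))\<^sup>2) \<le> 1 / (real (Suc n))\<^sup>2"
      by (simp add: divide_right_mono)
  next
    show "summable (\<lambda>n. 1 / (real (Suc n))\<^sup>2)"
      using inverse_squares_sums by (simp add: sums_iff add.commute)
  qed
  have "continuous_on {0..1} (\<lambda>x. \<Sum>i. x ^ Suc i / (real (Suc i))\<^sup>2)"
    by (rule uniform_limit_theorem[OF _ ul]) (auto intro!: always_eventually continuous_intros)
  thus ?thesis by (simp add: Li2_def[abs_def])
qed

lemma log_series_sum:
  fixes x :: real
  assumes "0 < x" "x < 1"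
  shows "(\<Sum>n. x ^ n / real (Suc n)) = - ln (1 - x) / x"
proof -
  have sm: "summable (\<lambda>n. x ^ n / real (Suc n))"
  proof (rule summable_comparison_test[of _ "\<lambda>n. x ^ n"])
    show "\<exists>N. \<forall>n\<ge>N. norm (x ^ n / real (Suc n)) \<le> x ^ n"
      using assms by (auto intro!: exI[of _ 0] simp: divide_le_eq)
    show "summable (\<lambda>n. x ^ n)" using assms by (intro summable_geometric) simp
  qed
  have "ln (1 - x) = (\<Sum>n. (-1)^n * (1 / real (n + 1)) * ((1 - x) - 1)^(Suc n))"
    using assms by (intro ln_series) auto
  also have "(\<lambda>n. (-1::real)^n * (1 / real (n + 1)) * ((1 - x) - 1)^(Suc n)) =
             (\<lambda>n. - x * (x ^ n / real (Suc n)))"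
  proof
    fix n
    have "(-1::real)^n * (-x)^(Suc n) = (-1)^n * ((-1)^Suc n * x ^ Suc n)"
      by (subst power_minus) simp
    also have "\<dots> = - (x ^ Suc n)" by (simp flip: power_add)
    finally show "(-1::real)^n * (1 / real (n + 1)) * ((1 - x) - 1)^(Suc n) = - x * (x ^ n / real (Suc n))"
      by (simp add: field_simps)
  qed
  also have "(\<Sum>n. - x * (x ^ n / real (Suc n))) = - x * (\<Sum>n. x ^ n / real (Suc n))"
    using sm by (rule suminf_mult)
  finally show ?thesis using assms by (simp add: field_simps)
qed

lemma Li2_deriv:
  fixes u :: real
  assumes "0 < u" "u < 1"
  shows "(Li2 has_real_derivative (- ln (1 - u) / u)) (at u)"
proof -
  have eq: "Li2 = (\<lambda>x. \<Sum>n. (1 / (real (Suc n))\<^sup>2) * x ^ Suc n)"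
    by (simp add: Li2_def[abs_def])
  have "DERIV (\<lambda>x. \<Sum>n. (1 / (real (Suc n))\<^sup>2) * x ^ Suc n) u :>
          (\<Sum>n. (1 / (real (Suc n))\<^sup>2) * real (Suc n) * u ^ n)"
  proof (rule DERIV_power_series'[where R = 1])
    fix x :: real assume x: "x \<in> {-1<..<1}"
    show "summable (\<lambda>n. (1 / (real (Suc n))\<^sup>2) * real (Suc n) * x ^ n)"
    proof (rule summable_comparison_test[of _ "\<lambda>n. \<bar>x\<bar> ^ n"])
      show "\<exists>N. \<forall>n\<ge>N. norm ((1 / (real (Suc n))\<^sup>2) * real (Suc n) * x ^ n) \<le> \<bar>x\<bar> ^ n"
      proof (intro exI[of _ 0] allI impI)
        fix n :: nat
        have "\<bar>x\<bar>^n * 1 \<le> \<bar>x\<bar>^n * (1 + real n)" by (intro mult_left_mono) auto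
        thus "norm ((1 / (real (Suc n))\<^sup>2) * real (Suc n) * x ^ n) \<le> \<bar>x\<bar> ^ n"
          by (simp add: power2_eq_square abs_mult power_abs divide_le_eq)
      qed
      show "summable (\<lambda>n. \<bar>x\<bar> ^ n)" using x by (intro summable_geometric) auto
    qed
  qed (use assms in auto)
  also have "(\<lambda>n. (1 / (real (Suc n))\<^sup>2) * real (Suc n) * u ^ n) = (\<lambda>n. u ^ n / real (Suc n))"
    by (auto simp: fun_eq_iff power2_eq_square)
  finally show ?thesis using log_series_sum[OF assms] eq by simp
qed

lemma xlog_lim: "((\<lambda>x::real. x * ln (1 - exp (- x))) \<longlongrightarrow> 0) (at_right 0)"
  by real_asymp

definition F :: "real \<Rightarrow> real" where
  "F x = x * ln (1 - exp (- x)) - Li2 (exp (- x)) + pi ^ 2 / 6"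

lemma F_deriv:
  assumes "0 < x"
  shows "(F has_real_derivative (x * exp (-x) / (1 - exp (-x)))) (at x)"
proof -
  have e1: "exp (-x) < 1" using assms by simp
  have e0: "0 < exp (-x)" by simp
  have d1: "((\<lambda>x. Li2 (exp (- x))) has_real_derivative
            (- ln (1 - exp (-x)) / exp (-x)) * (exp (-x) * (-1))) (at x)"
  proof -
    have de: "((\<lambda>x. exp (-x)) has_real_derivative exp (-x) * (-1)) (at x)"
      by (auto intro!: derivative_eq_intros)
    show ?thesis using DERIV_chain2[OF Li2_deriv[OF e0 e1] de] .
  qed
  have d2: "((\<lambda>x. x * ln (1 - exp (- x))) has_real_derivative
            1 * ln (1 - exp (-x)) + x * ((- (exp (-x) * (-1))) / (1 - exp (-x)))) (at x)"
    using e1 by (auto intro!: derivative_eq_intros)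
  have "(F has_real_derivative
           (1 * ln (1 - exp (-x)) + x * ((- (exp (-x) * (-1))) / (1 - exp (-x))))
           - (- ln (1 - exp (-x)) / exp (-x)) * (exp (-x) * (-1)) + 0) (at x)"
    unfolding F_def[abs_def] by (intro DERIV_add DERIV_diff d1 d2 DERIV_const)
  thus ?thesis using e0 by (simp add: field_simps)
qed

lemma F_lim: "(F \<longlongrightarrow> 0) (at_right 0)"
proof -
  have c: "continuous_on {0..1} Li2" by (rule Li2_cont)
  have t: "((\<lambda>x::real. exp (- x)) \<longlongrightarrow> 1) (at_right 0)" by real_asymp
  have ev: "eventually (\<lambda>x::real. exp (- x) \<in> {0..1}) (at_right 0)"
    by (auto simp: eventually_at_right_field intro!: exI[of _ 1])
  have "((\<lambda>x. Li2 (exp (- x))) \<longlongrightarrow> Li2 1) (at_right 0)"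
    by (rule continuous_on_tendsto_compose[OF c t]) (use ev in auto)
  hence "((\<lambda>x. x * ln (1 - exp (- x)) - Li2 (exp (- x)) + pi ^ 2 / 6) \<longlongrightarrow> 0 - Li2 1 + pi^2/6) (at_right 0)"
    by (intro tendsto_intros xlog_lim)
  thus ?thesis by (simp add: F_def[abs_def] Li2_one)
qed



lemma Rrem_Suc: "Rrem (Suc n) x = Rrem n x - x ^ Suc n / fact (Suc n)"
  by (simp add: Rrem_def)

lemma Rrem_0: "Rrem n 0 = 0"
  by (induction n) (simp_all add: Rrem_Suc, simp add: Rrem_def)

lemma Rrem_deriv: "(Rrem n has_real_derivative (Rrem n x + x ^ n / fact n)) (at x)"
proof (induction n)
  case 0
  show ?case unfolding Rrem_def[abs_def] by (auto intro!: derivative_eq_intros)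
next
  case (Suc n)
  have d: "((\<lambda>x. x ^ Suc n / fact (Suc n)) has_real_derivative x ^ n / fact n) (at x)"
  proof -
    have "((\<lambda>x. x ^ Suc n / fact (Suc n)) has_real_derivative (real (Suc n) * x ^ n) / fact (Suc n)) (at x)"
      by (intro derivative_eq_intros) auto
    also have "(real (Suc n) * x ^ n) / fact (Suc n) = x ^ n / fact n"
      by (simp add: fact_Suc field_simps del: of_nat_Suc)
    finally show ?thesis .
  qed
  have "((\<lambda>x. Rrem n x - x ^ Suc n / fact (Suc n)) has_real_derivative
          (Rrem n x + x ^ n / fact n) - x ^ n / fact n) (at x)"
    by (intro DERIV_diff Suc d)
  thus ?case by (simp add: Rrem_Suc[abs_def] Rrem_Suc field_simps)
qed

lemma Rrem_bound: "\<bar>Rrem n x\<bar> \<le> exp \<bar>x\<bar> * \<bar>x\<bar> ^ Suc n / fact (Suc n)"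
proof -
  obtain t where t: "\<bar>t\<bar> \<le> \<bar>x\<bar>" "exp x = (\<Sum>m<Suc n. x ^ m / fact m) + exp t / fact (Suc n) * x ^ Suc n"
    using Maclaurin_exp_le[of x "Suc n"] by blast
  have "Rrem n x = exp t / fact (Suc n) * x ^ Suc n"
    using t(2) by (simp add: Rrem_def lessThan_Suc_atMost)
  hence "\<bar>Rrem n x\<bar> = exp t * \<bar>x\<bar> ^ Suc n / fact (Suc n)" by (simp add: abs_mult power_abs)
  also have "\<dots> \<le> exp \<bar>x\<bar> * \<bar>x\<bar> ^ Suc n / fact (Suc n)"
    using t(1) by (intro divide_right_mono mult_right_mono) auto
  finally show ?thesis .
qed

theorem mainTheorem7:
  fixes y :: real
  assumes "0 < y" and "y < 2 * pi"
  shows "(\<lambda>n. (-1) ^ n * bernoulli_num n * Rrem n y) sums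
           (exp y * (y * ln (1 - exp (- y)) - Li2 (exp (- y)) + pi ^ 2 / 6))"
proof -
  define a where "a = (y + 2 * pi) / 2"
  have a: "y < a" "a < 2 * pi" "0 < a" using assms by (auto simp: a_def)
  define f where "f n x = (-1) ^ n * bernoulli_num n * Rrem n x" for n x
  define f' where "f' n x = (-1) ^ n * bernoulli_num n * (Rrem n x + x ^ n / fact n)" for n x
  define q where "q n x = bernoulli_num n / fact n * (- x) ^ n" for n and x :: real
  have f'_eq: "f' n x = f n x + q n x" for n x
  proof -
    have "(- x) ^ n = (-1) ^ n * x ^ n" by (rule power_minus)
    thus ?thesis by (simp add: f_def f'_def q_def distrib_left mult_ac)
  qed
  define M where "M n = \<bar>bernoulli_num n / fact n\<bar> * a ^ n * (a * exp a + 1)" for n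
  have Msum: "summable M"
    unfolding M_def by (intro summable_mult2 bern_abs) (use a in auto)
  have bound: "norm (f' n x) \<le> M n" if x: "x \<in> {0..a}" for n x
  proof -
    have fpos: "(0::real) < fact n" by simp
    have "\<bar>Rrem n x\<bar> \<le> exp \<bar>x\<bar> * \<bar>x\<bar> ^ Suc n / fact (Suc n)" by (rule Rrem_bound)
    also have "\<dots> \<le> exp a * a ^ Suc n / fact (Suc n)"
      using x by (intro divide_right_mono mult_mono power_mono) auto
    also have "\<dots> \<le> exp a * a ^ Suc n / fact n"
      using a by (intro divide_left_mono) (auto intro: fact_mono)
    finally have R: "\<bar>Rrem n x\<bar> \<le> exp a * a ^ Suc n / fact n" .
    have "\<bar>f n x\<bar> = \<bar>bernoulli_num n\<bar> * \<bar>Rrem n x\<bar>" by (simp add: f_def abs_mult)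
    also have "\<dots> \<le> \<bar>bernoulli_num n\<bar> * (exp a * a ^ Suc n / fact n)"
      using R by (intro mult_left_mono) auto
    also have "\<dots> = \<bar>bernoulli_num n / fact n\<bar> * a ^ n * (a * exp a)"
      using fpos by (simp add: field_simps)
    finally have A: "\<bar>f n x\<bar> \<le> \<bar>bernoulli_num n / fact n\<bar> * a ^ n * (a * exp a)" .
    have "\<bar>q n x\<bar> = \<bar>bernoulli_num n / fact n\<bar> * x ^ n" using x by (simp add: q_def abs_mult power_abs)
    also have "\<dots> \<le> \<bar>bernoulli_num n / fact n\<bar> * a ^ n"
      using x by (intro mult_left_mono power_mono) auto
    finally have B: "\<bar>q n x\<bar> \<le> \<bar>bernoulli_num n / fact n\<bar> * a ^ n" .
    have N: "norm (f' n x) \<le> \<bar>f n x\<bar> + \<bar>q n x\<bar>" by (simp add: f'_eq abs_triangle_ineq)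
    have "M n = \<bar>bernoulli_num n / fact n\<bar> * a ^ n * (a * exp a) + \<bar>bernoulli_num n / fact n\<bar> * a ^ n"
      by (simp only: M_def distrib_left mult_1_right)
    thus ?thesis using A B N by linarith
  qed
  have ul: "uniform_limit {0..a} (\<lambda>n x. \<Sum>i<n. f' i x) (\<lambda>x. \<Sum>i. f' i x) sequentially"
    by (rule Weierstrass_m_test[OF bound Msum])
  have der: "(f n has_field_derivative f' n x) (at x within {0..a})" for n x
  proof -
    have "((\<lambda>x. (-1) ^ n * bernoulli_num n * Rrem n x) has_field_derivative
            (-1) ^ n * bernoulli_num n * (Rrem n x + x ^ n / fact n)) (at x)"
      by (intro DERIV_cmult Rrem_deriv)
    thus ?thesis unfolding f_def[abs_def] f'_def by (rule has_field_derivative_at_within)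
  qed
  have cvx: "convex {0..a::real}" by (simp add: convex_real_interval)
  have f0: "f n 0 = 0" for n by (simp add: f_def Rrem_0)
  have s0: "summable (\<lambda>n. f n 0)" by (simp add: f0)
  obtain G where G: "\<And>x. x \<in> {0..a} \<Longrightarrow> (\<lambda>n. f n x) sums G x \<and>
        (G has_field_derivative (\<Sum>i. f' i x)) (at x within {0..a})"
  proof -
    have z: "(0::real) \<in> {0..a}" using a by simp
    show ?thesis using has_field_derivative_series[OF cvx der ul z s0] that by blast
  qed
  have G0: "G 0 = 0"
  proof -
    have "(\<lambda>n. f n 0) sums G 0" using G[of 0] a by auto
    moreover have "(\<lambda>n. f n 0) sums 0" by (simp add: f0)
    ultimately show ?thesis using sums_unique2 by blast
  qed
  have Gd: "(G has_real_derivative (G x + (- x) / (exp (- x) - 1))) (at x)" if x: "x \<in> {0<..y}" for x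
  proof -
    have xS: "x \<in> {0..a}" using x a by auto
    have fs: "(\<lambda>n. f n x) sums G x" using G[OF xS] by auto
    have "\<bar>-x\<bar> < 2 * pi" using x a by auto
    from bern_sums[OF this] have qs: "(\<lambda>n. q n x) sums ((- x) / (exp (- x) - 1))"
      using x by (simp add: q_def)
    have "(\<lambda>n. f' n x) sums (G x + (- x) / (exp (- x) - 1))"
      unfolding f'_eq by (intro sums_add fs qs)
    hence "(\<Sum>i. f' i x) = G x + (- x) / (exp (- x) - 1)" by (rule sums_unique[symmetric])
    moreover have "at x within {0..a} = at x"
      using x a by (intro at_within_interior) auto
    ultimately show ?thesis using G[OF xS] by simp
  qed
  define H where "H x = exp x * F x" for x
  have Hd: "(H has_real_derivative (exp x * F x + x * exp (-x) / (1 - exp (-x)) * exp x)) (at x)"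
    if "0 < x" for x
    unfolding H_def[abs_def] using DERIV_mult[OF DERIV_exp F_deriv[OF that]] by simp
  define K where "K x = exp (- x) * (G x - H x)" for x
  have Kd: "(K has_real_derivative 0) (at x)" if x: "x \<in> {0<..y}" for x
  proof -
    have ed: "((\<lambda>x. exp (- x)) has_real_derivative exp (- x) * (-1)) (at x)"
      by (auto intro!: derivative_eq_intros)
    have "(K has_real_derivative
           exp (- x) * (-1) * (G x - H x) +
           ((G x + (- x) / (exp (- x) - 1)) - (exp x * F x + x * exp (-x) / (1 - exp (-x)) * exp x))
            * exp (- x)) (at x)"
      unfolding K_def[abs_def] using x by (intro DERIV_mult ed DERIV_diff Gd Hd) auto
    note D = this
    have Z: "exp (- x) * (-1) * (G x - H x) +
           ((G x + (- x) / (exp (- x) - 1)) - (exp x * F x + x * exp (-x) / (1 - exp (-x)) * exp x))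
            * exp (- x) = 0"
    proof -
      have e1: "exp (- x) < 1" using x by auto
      have ee: "exp (-x) * exp x = 1" by (simp add: exp_minus)
      have "x * exp (-x) / (1 - exp (-x)) * exp x = x * (exp (-x) * exp x) / (1 - exp (-x))" by simp
      also have "\<dots> = x / (1 - exp (-x))" by (simp only: ee mult_1_right)
      also have "\<dots> = (- x) / (exp (- x) - 1)" using e1 by (simp add: field_simps)
      finally have s: "x * exp (-x) / (1 - exp (-x)) * exp x = (- x) / (exp (- x) - 1)" .
      show ?thesis unfolding s by (simp add: H_def algebra_simps)
    qed
    show ?thesis using D by (simp only: Z)
  qed
  have cvx2: "convex {0<..y::real}" by (simp add: convex_real_interval)
  obtain c where c: "\<And>x. x \<in> {0<..y} \<Longrightarrow> K x = c"
    using has_field_derivative_zero_constant[OF cvx2, of K]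
      Kd has_field_derivative_at_within by blast
  have Glim: "(G \<longlongrightarrow> 0) (at_right 0)"
  proof -
    have "continuous (at 0 within {0..a}) G"
      using G[of 0] a by (auto intro: DERIV_continuous)
    hence "(G \<longlongrightarrow> G 0) (at 0 within {0..a})" by (simp add: continuous_within)
    thus ?thesis using G0 at_within_Icc_at_right[OF a(3)] by simp
  qed
  have Hlim: "(H \<longlongrightarrow> 0) (at_right 0)"
  proof -
    have "((\<lambda>x. exp x * F x) \<longlongrightarrow> exp 0 * 0) (at_right 0)"
      by (intro tendsto_intros F_lim)
    thus ?thesis by (simp add: H_def[abs_def])
  qed
  have Klim: "(K \<longlongrightarrow> 0) (at_right 0)"
  proof -
    have "((\<lambda>x. exp (- x) * (G x - H x)) \<longlongrightarrow> exp (- 0) * (0 - 0)) (at_right 0)"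
      by (intro tendsto_intros Glim Hlim)
    thus ?thesis by (simp add: K_def[abs_def])
  qed
  have ev: "eventually (\<lambda>x. K x = c) (at_right 0)"
    unfolding eventually_at_right_field using assms(1) c by (intro exI[of _ y]) auto
  have "(K \<longlongrightarrow> c) (at_right 0)"
    by (rule tendsto_eventually[OF ev])
  hence "c = 0" using Klim tendsto_unique[OF trivial_limit_at_right_real] by blast
  hence "K y = 0" using c[of y] assms by auto
  hence Gy: "G y = H y" by (simp add: K_def)
  have "(\<lambda>n. f n y) sums G y" using G[of y] a assms by auto
  thus ?thesis using Gy by (simp add: f_def H_def F_def)
qed


end
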